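(* Let $A$ and $B$ be rings, $f: A\to B$ a ring homomorphism and $J$ a proper ideal of $B$. Then: (1) If $A\bowtie^{f}J$ is an Armendariz ring, then $A$ is an Armendariz ring. (2) If $A$ and $f(A)+J$ are Armendariz rings, then $A\bowtie^{f}J$ is an Armendariz ring.
   Context: All rings are associative with identity (not necessarily commutative), ring homomorphisms are unital, and ideals are two-sided. For a ring homomorphism $f:A\to B$ and an ideal $J$ of $B$, the amalgamation of $A$ with $B$ along $J$ with respect to $f$ is the subring $A\bowtie^{f}J=\{(a,f(a)+j)\mid a\in A,\ j\in J\}$ of $A\times B$; $f(A)+J=\{f(a)+j: a\in A, j\in J\}$ is a subring of $B$. A ring $R$ is Armendariz if whenever $p(x)=\sum_{i=0}^n a_ix^i$ and $q(x)=\sum_{j=0}^m b_jx^j$ in $R[x]$ satisfy $p(x)q(x)=0$, then $a_ib_j=0$ for all $i,j$. *)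

theory Defs
  imports "HOL-Algebra.Algebra"
begin

text \<open>Polynomials are those of the
  HOL-Algebra univariate polynomial ring UP R (valid for non-commutative R).\<close>
definition armendariz :: "('a, 'm) ring_scheme \<Rightarrow> bool" where
  "armendariz R \<longleftrightarrow>
     (\<forall>p \<in> carrier (UP R). \<forall>q \<in> carrier (UP R).
        p \<otimes>\<^bsub>UP R\<^esub> q = \<zero>\<^bsub>UP R\<^esub> \<longrightarrow>
        (\<forall>i j. coeff (UP R) p i \<otimes>\<^bsub>R\<^esub> coeff (UP R) q j = \<zero>\<^bsub>R\<^esub>))"

definition amalgamation ::
  "('a, 'm) ring_scheme \<Rightarrow> ('b, 'n) ring_scheme \<Rightarrow> ('a \<Rightarrow> 'b) \<Rightarrow> 'b set \<Rightarrow> ('a \<times> 'b) ring" where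
  "amalgamation A B f J =
     (RDirProd A B) \<lparr> carrier := {(a, f a \<oplus>\<^bsub>B\<^esub> j) | a j. a \<in> carrier A \<and> j \<in> J} \<rparr>"

definition image_plus_ideal ::
  "('a, 'm) ring_scheme \<Rightarrow> ('b, 'n) ring_scheme \<Rightarrow> ('a \<Rightarrow> 'b) \<Rightarrow> 'b set \<Rightarrow> ('b, 'n) ring_scheme" where
  "image_plus_ideal A B f J =
     B \<lparr> carrier := {f a \<oplus>\<^bsub>B\<^esub> j | a j. a \<in> carrier A \<and> j \<in> J} \<rparr>"

end

theory Submission imports Defs begin

lemma poly_map:
  assumes R: "ring R" and S: "ring S" and h: "h \<in> ring_hom R S"
    and p: "p \<in> carrier (UP R)" and q: "q \<in> carrier (UP R)"
  shows "h \<circ> p \<in> carrier (UP S)"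
    and "(h \<circ> p) \<otimes>\<^bsub>UP S\<^esub> (h \<circ> q) = h \<circ> (p \<otimes>\<^bsub>UP R\<^esub> q)"
proof -
  interpret H: ring_hom_ring R S h using ring_hom_ringI2[OF R S h] .
  have mp: "\<And>x. x \<in> up R \<Longrightarrow> h \<circ> x \<in> up S"
  proof -
    fix x assume x: "x \<in> up R"
    then obtain n where "bound \<zero>\<^bsub>R\<^esub> n x" by auto
    then have "bound \<zero>\<^bsub>S\<^esub> n (h \<circ> x)" by (auto simp: bound_def)
    moreover have "\<And>m. (h \<circ> x) m \<in> carrier S" using x by (auto simp: up_def Pi_def)
    ultimately show "h \<circ> x \<in> up S" by (auto simp: up_def Pi_def)
  qed
  show "h \<circ> p \<in> carrier (UP S)" using mp p by (simp add: UP_def)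
  have pc: "\<And>n. p n \<in> carrier R" "\<And>n. q n \<in> carrier R" using p q by (auto simp: UP_def up_def Pi_def)
  show "(h \<circ> p) \<otimes>\<^bsub>UP S\<^esub> (h \<circ> q) = h \<circ> (p \<otimes>\<^bsub>UP R\<^esub> q)"
  proof -
    have "\<And>n. (\<lambda>i. h (p i) \<otimes>\<^bsub>S\<^esub> h (q (n - i))) = h \<circ> (\<lambda>i. p i \<otimes>\<^bsub>R\<^esub> q (n - i))"
      using pc by (auto simp: fun_eq_iff)
    note eq = this
    show ?thesis using mp p q pc apply (auto simp: UP_def fun_eq_iff)
      by (metis (no_types) eq)
  qed
qed

lemma arm_transfer:
  assumes R: "ring R" and S1: "ring S1" and S2: "ring S2"
    and h1: "h1 \<in> ring_hom R S1" and h2: "h2 \<in> ring_hom R S2"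
    and a1: "armendariz S1" and a2: "armendariz S2"
    and sep: "\<And>x. x \<in> carrier R \<Longrightarrow> h1 x = \<zero>\<^bsub>S1\<^esub> \<Longrightarrow> h2 x = \<zero>\<^bsub>S2\<^esub> \<Longrightarrow> x = \<zero>\<^bsub>R\<^esub>"
  shows "armendariz R"
  unfolding armendariz_def
proof (intro ballI impI allI)
  fix p q i j
  assume p: "p \<in> carrier (UP R)" and q: "q \<in> carrier (UP R)"
    and pq: "p \<otimes>\<^bsub>UP R\<^esub> q = \<zero>\<^bsub>UP R\<^esub>"
  interpret H1: ring_hom_ring R S1 h1 using ring_hom_ringI2[OF R S1 h1] .
  interpret H2: ring_hom_ring R S2 h2 using ring_hom_ringI2[OF R S2 h2] .
  have pc: "p i \<in> carrier R" "q j \<in> carrier R" using p q by (auto simp: UP_def up_def Pi_def)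
  have z1: "h1 (p i \<otimes>\<^bsub>R\<^esub> q j) = \<zero>\<^bsub>S1\<^esub>"
  proof -
    have "(h1 \<circ> p) \<otimes>\<^bsub>UP S1\<^esub> (h1 \<circ> q) = \<zero>\<^bsub>UP S1\<^esub>"
      using poly_map(2)[OF R S1 h1 p q] pq by (simp add: UP_def comp_def)
    with a1 poly_map(1)[OF R S1 h1 p q] poly_map(1)[OF R S1 h1 q q]
    have "coeff (UP S1) (h1 \<circ> p) i \<otimes>\<^bsub>S1\<^esub> coeff (UP S1) (h1 \<circ> q) j = \<zero>\<^bsub>S1\<^esub>"
      unfolding armendariz_def by blast
    then show ?thesis using poly_map(1)[OF R S1 h1 p q] poly_map(1)[OF R S1 h1 q q] pc
      by (simp add: UP_def)
  qed
  have z2: "h2 (p i \<otimes>\<^bsub>R\<^esub> q j) = \<zero>\<^bsub>S2\<^esub>"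
  proof -
    have "(h2 \<circ> p) \<otimes>\<^bsub>UP S2\<^esub> (h2 \<circ> q) = \<zero>\<^bsub>UP S2\<^esub>"
      using poly_map(2)[OF R S2 h2 p q] pq by (simp add: UP_def comp_def)
    with a2 poly_map(1)[OF R S2 h2 p q] poly_map(1)[OF R S2 h2 q q]
    have "coeff (UP S2) (h2 \<circ> p) i \<otimes>\<^bsub>S2\<^esub> coeff (UP S2) (h2 \<circ> q) j = \<zero>\<^bsub>S2\<^esub>"
      unfolding armendariz_def by blast
    then show ?thesis using poly_map(1)[OF R S2 h2 p q] poly_map(1)[OF R S2 h2 q q] pc
      by (simp add: UP_def)
  qed
  have "p i \<otimes>\<^bsub>R\<^esub> q j = \<zero>\<^bsub>R\<^esub>" using sep[OF _ z1 z2] pc by simp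
  then show "coeff (UP R) p i \<otimes>\<^bsub>R\<^esub> coeff (UP R) q j = \<zero>\<^bsub>R\<^esub>"
    using p q by (simp add: UP_def)
qed


lemma RDP_simps:
  "\<one>\<^bsub>RDirProd R S\<^esub> = (\<one>\<^bsub>R\<^esub>, \<one>\<^bsub>S\<^esub>)"
  "\<zero>\<^bsub>RDirProd R S\<^esub> = (\<zero>\<^bsub>R\<^esub>, \<zero>\<^bsub>S\<^esub>)"
  "(a, b) \<otimes>\<^bsub>RDirProd R S\<^esub> (c, d) = (a \<otimes>\<^bsub>R\<^esub> c, b \<otimes>\<^bsub>S\<^esub> d)"
  "(a, b) \<oplus>\<^bsub>RDirProd R S\<^esub> (c, d) = (a \<oplus>\<^bsub>R\<^esub> c, b \<oplus>\<^bsub>S\<^esub> d)"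
  by (auto simp add: RDirProd_def DirProd_def monoid.defs)

lemma RDP_neg:
  assumes "ring R" "ring S" "a \<in> carrier R" "b \<in> carrier S"
  shows "\<ominus>\<^bsub>RDirProd R S\<^esub> (a, b) = (\<ominus>\<^bsub>R\<^esub> a, \<ominus>\<^bsub>S\<^esub> b)"
proof -
  interpret P: ring "RDirProd R S" using RDirProd_ring assms by blast
  interpret R: ring R by fact
  interpret S: ring S by fact
  show ?thesis
    by (rule P.minus_equality) (use assms in \<open>auto simp: RDP_simps RDirProd_carrier R.l_neg S.l_neg\<close>)
qed


lemma amal_subring:
  assumes A: "ring A" and B: "ring B" and f: "f \<in> ring_hom A B" and J: "ideal J B"
  shows "subring {(a, f a \<oplus>\<^bsub>B\<^esub> j) | a j. a \<in> carrier A \<and> j \<in> J} (RDirProd A B)"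
proof -
  interpret A: ring A by fact
  interpret B: ring B by fact
  interpret J: ideal J B by fact
  interpret H: ring_hom_ring A B f using ring_hom_ringI2[OF A B f] .
  interpret P: ring "RDirProd A B" using RDirProd_ring A B by blast
  have Jc: "\<And>j. j \<in> J \<Longrightarrow> j \<in> carrier B" using J.a_subset by blast
  show ?thesis
  proof (rule P.subringI)
    show "{(a, f a \<oplus>\<^bsub>B\<^esub> j) | a j. a \<in> carrier A \<and> j \<in> J} \<subseteq> carrier (RDirProd A B)"
      using Jc by (auto simp: RDirProd_carrier)
    show "\<one>\<^bsub>RDirProd A B\<^esub> \<in> {(a, f a \<oplus>\<^bsub>B\<^esub> j) | a j. a \<in> carrier A \<and> j \<in> J}"
      by (auto simp: RDP_simps intro!: exI[of _ "\<zero>\<^bsub>B\<^esub>"] J.zero_closed)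
  next
    fix h assume "h \<in> {(a, f a \<oplus>\<^bsub>B\<^esub> j) | a j. a \<in> carrier A \<and> j \<in> J}"
    then obtain a j where h: "h = (a, f a \<oplus>\<^bsub>B\<^esub> j)" "a \<in> carrier A" "j \<in> J" by blast
    have "\<ominus>\<^bsub>B\<^esub> (f a \<oplus>\<^bsub>B\<^esub> j) = f (\<ominus>\<^bsub>A\<^esub> a) \<oplus>\<^bsub>B\<^esub> \<ominus>\<^bsub>B\<^esub> j"
      using h Jc by (simp add: B.minus_add)
    have "\<ominus>\<^bsub>B\<^esub> j \<in> J" using h by simp
    show "\<ominus>\<^bsub>RDirProd A B\<^esub> h \<in> {(a, f a \<oplus>\<^bsub>B\<^esub> j) | a j. a \<in> carrier A \<and> j \<in> J}"
    proof -
      have "\<ominus>\<^bsub>RDirProd A B\<^esub> h = (\<ominus>\<^bsub>A\<^esub> a, \<ominus>\<^bsub>B\<^esub> (f a \<oplus>\<^bsub>B\<^esub> j))"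
        using h Jc by (simp add: RDP_neg[OF A B])
      also have "\<dots> = (\<ominus>\<^bsub>A\<^esub> a, f (\<ominus>\<^bsub>A\<^esub> a) \<oplus>\<^bsub>B\<^esub> \<ominus>\<^bsub>B\<^esub> j)"
        using \<open>\<ominus>\<^bsub>B\<^esub> (f a \<oplus>\<^bsub>B\<^esub> j) = _\<close> by simp
      finally show ?thesis using \<open>\<ominus>\<^bsub>B\<^esub> j \<in> J\<close> A.a_inv_closed[OF h(2)] by blast
    qed
  next
    fix h1 h2 assume "h1 \<in> {(a, f a \<oplus>\<^bsub>B\<^esub> j) | a j. a \<in> carrier A \<and> j \<in> J}"
      "h2 \<in> {(a, f a \<oplus>\<^bsub>B\<^esub> j) | a j. a \<in> carrier A \<and> j \<in> J}"
    then obtain a j a' j' where h: "h1 = (a, f a \<oplus>\<^bsub>B\<^esub> j)" "a \<in> carrier A" "j \<in> J"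
      "h2 = (a', f a' \<oplus>\<^bsub>B\<^esub> j')" "a' \<in> carrier A" "j' \<in> J" by blast
    have fc: "f a \<in> carrier B" "f a' \<in> carrier B" using h by auto
    have jc: "j \<in> carrier B" "j' \<in> carrier B" using h Jc by auto
    have "(f a \<oplus>\<^bsub>B\<^esub> j) \<otimes>\<^bsub>B\<^esub> (f a' \<oplus>\<^bsub>B\<^esub> j') =
        f (a \<otimes>\<^bsub>A\<^esub> a') \<oplus>\<^bsub>B\<^esub> ((f a \<otimes>\<^bsub>B\<^esub> j' \<oplus>\<^bsub>B\<^esub> j \<otimes>\<^bsub>B\<^esub> f a') \<oplus>\<^bsub>B\<^esub> j \<otimes>\<^bsub>B\<^esub> j')"
      using fc jc h by (simp add: B.l_distr B.r_distr B.a_ac)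
    moreover have "(f a \<otimes>\<^bsub>B\<^esub> j' \<oplus>\<^bsub>B\<^esub> j \<otimes>\<^bsub>B\<^esub> f a') \<oplus>\<^bsub>B\<^esub> j \<otimes>\<^bsub>B\<^esub> j' \<in> J"
      using fc jc h by (intro J.a_closed J.I_l_closed J.I_r_closed) auto
    ultimately show "h1 \<otimes>\<^bsub>RDirProd A B\<^esub> h2 \<in> {(a, f a \<oplus>\<^bsub>B\<^esub> j) | a j. a \<in> carrier A \<and> j \<in> J}"
      using h by (auto simp: RDP_simps)
    have "(f a \<oplus>\<^bsub>B\<^esub> j) \<oplus>\<^bsub>B\<^esub> (f a' \<oplus>\<^bsub>B\<^esub> j') = f (a \<oplus>\<^bsub>A\<^esub> a') \<oplus>\<^bsub>B\<^esub> (j \<oplus>\<^bsub>B\<^esub> j')"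
      using fc jc h by (simp add: B.a_ac)
    moreover have "j \<oplus>\<^bsub>B\<^esub> j' \<in> J" using h by (simp add: J.a_closed)
    ultimately show "h1 \<oplus>\<^bsub>RDirProd A B\<^esub> h2 \<in> {(a, f a \<oplus>\<^bsub>B\<^esub> j) | a j. a \<in> carrier A \<and> j \<in> J}"
      using h by (auto simp: RDP_simps)
  qed
qed


theorem theorem2p2:
  fixes A :: "('a, 'm) ring_scheme" and B :: "('b, 'n) ring_scheme"
    and f :: "'a \<Rightarrow> 'b" and J :: "'b set"
  assumes "ring A" and "ring B" and "f \<in> ring_hom A B"
    and "ideal J B" and "J \<noteq> carrier B"
  shows "(armendariz (amalgamation A B f J) \<longrightarrow> armendariz A)
       \<and> (armendariz A \<and> armendariz (image_plus_ideal A B f J)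
            \<longrightarrow> armendariz (amalgamation A B f J))"
proof -
  note A = assms(1) and B = assms(2) and f = assms(3) and J = assms(4)
  interpret A: ring A by fact
  interpret B: ring B by fact
  interpret J: ideal J B by fact
  interpret H: ring_hom_ring A B f using ring_hom_ringI2[OF A B f] .
  interpret P: ring "RDirProd A B" using RDirProd_ring A B by blast
  define Hs where "Hs = {(a, f a \<oplus>\<^bsub>B\<^esub> j) | a j. a \<in> carrier A \<and> j \<in> J}"
  define K where "K = {f a \<oplus>\<^bsub>B\<^esub> j | a j. a \<in> carrier A \<and> j \<in> J}"
  have M: "amalgamation A B f J = (RDirProd A B)\<lparr>carrier := Hs\<rparr>"
    by (simp add: amalgamation_def Hs_def)
  have C: "image_plus_ideal A B f J = B\<lparr>carrier := K\<rparr>"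
    by (simp add: image_plus_ideal_def K_def)
  have sub: "subring Hs (RDirProd A B)" unfolding Hs_def by (rule amal_subring[OF A B f J])
  have ringM: "ring (amalgamation A B f J)" unfolding M by (rule P.subring_is_ring[OF sub])
  have snd_hom: "snd \<in> ring_hom (RDirProd A B) B"
    by (auto simp: ring_hom_def RDirProd_carrier RDP_simps)
  interpret SH: ring_hom_ring "RDirProd A B" B snd using ring_hom_ringI2[OF P.ring_axioms B snd_hom] .
  have KH: "K = snd ` Hs" unfolding K_def Hs_def by force
  have subK: "subring K B" unfolding KH by (rule SH.img_is_subring[OF sub])
  have ringC: "ring (image_plus_ideal A B f J)" unfolding C by (rule B.subring_is_ring[OF subK])
  have Jc: "\<And>j. j \<in> J \<Longrightarrow> j \<in> carrier B" using J.a_subset by blast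
  have Hc: "\<And>x. x \<in> Hs \<Longrightarrow> fst x \<in> carrier A \<and> snd x \<in> carrier B"
    using Jc unfolding Hs_def by auto
  have phi: "(\<lambda>a. (a, f a)) \<in> ring_hom A (amalgamation A B f J)"
  proof -
    have "\<And>a. a \<in> carrier A \<Longrightarrow> (a, f a) \<in> Hs"
      unfolding Hs_def by (auto intro!: exI[of _ "\<zero>\<^bsub>B\<^esub>"])
    then show ?thesis unfolding M
      by (auto simp: ring_hom_def RDP_simps)
  qed
  have fst_hom: "fst \<in> ring_hom (amalgamation A B f J) A"
    using Hc unfolding M by (auto simp: ring_hom_def RDP_simps)
  have snd_hom': "snd \<in> ring_hom (amalgamation A B f J) (image_plus_ideal A B f J)"
    unfolding M C KH by (auto simp: ring_hom_def RDP_simps)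
  have zM: "\<zero>\<^bsub>amalgamation A B f J\<^esub> = (\<zero>\<^bsub>A\<^esub>, \<zero>\<^bsub>B\<^esub>)" unfolding M by (simp add: RDP_simps)
  have zC: "\<zero>\<^bsub>image_plus_ideal A B f J\<^esub> = \<zero>\<^bsub>B\<^esub>" unfolding C by simp
  show ?thesis
  proof (intro conjI impI)
    assume "armendariz (amalgamation A B f J)"
    note a = this
    show "armendariz A"
      by (rule arm_transfer[OF A ringM ringM phi phi a a]) (auto simp: zM)
  next
    assume a: "armendariz A \<and> armendariz (image_plus_ideal A B f J)"
    show "armendariz (amalgamation A B f J)"
      by (rule arm_transfer[OF ringM A ringC fst_hom snd_hom']) (use a in \<open>auto simp: zM zC\<close>)
  qed
qed

end
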